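(* For any nontrivial connected graph $G$, $\gamma_{oiR}(G)<\gamma_{oidR}(G)<2\gamma_{oiR}(G)$.
   Context: A graph is nontrivial if it has at least two vertices. A DRD function of $G$ is $f:V(G)\to\{0,1,2,3\}$ such that every vertex with value $0$ has a neighbor with value $3$ or two neighbors with value $2$, and every vertex with value $1$ has a neighbor with value at least $2$; it is an OIDRD function if the set of vertices with value $0$ is independent, and $\gamma_{oidR}(G)$ is the minimum weight $\sum_v f(v)$ of an OIDRD function. A Roman dominating function is $f:V(G)\to\{0,1,2\}$ such that every vertex with value $0$ has a neighbor with value $2$; it is an OIRD function if the set of vertices with value $0$ is independent, and $\gamma_{oiR}(G)$ is the minimum weight of an OIRD function. *)

theory Defs
  imports Main
begin

definition graph :: "'a set \<Rightarrow> ('a \<Rightarrow> 'a \<Rightarrow> bool) \<Rightarrow> bool" where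
  "graph V E \<longleftrightarrow> finite V \<and> (\<forall>x y. E x y \<longrightarrow> x \<in> V \<and> y \<in> V)
     \<and> (\<forall>x y. E x y \<longrightarrow> E y x) \<and> (\<forall>x. \<not> E x x)"

definition connected_graph :: "'a set \<Rightarrow> ('a \<Rightarrow> 'a \<Rightarrow> bool) \<Rightarrow> bool" where
  "connected_graph V E \<longleftrightarrow> graph V E \<and> V \<noteq> {} \<and> (\<forall>x\<in>V. \<forall>y\<in>V. E\<^sup>*\<^sup>* x y)"

definition nontrivial :: "'a set \<Rightarrow> bool" where
  "nontrivial V \<longleftrightarrow> card V \<ge> 2"

definition indep_set :: "('a \<Rightarrow> 'a \<Rightarrow> bool) \<Rightarrow> 'a set \<Rightarrow> bool" where
  "indep_set E S \<longleftrightarrow> (\<forall>x\<in>S. \<forall>y\<in>S. \<not> E x y)"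

definition weight :: "'a set \<Rightarrow> ('a \<Rightarrow> nat) \<Rightarrow> nat" where
  "weight V f = (\<Sum>v\<in>V. f v)"

definition DRD :: "'a set \<Rightarrow> ('a \<Rightarrow> 'a \<Rightarrow> bool) \<Rightarrow> ('a \<Rightarrow> nat) \<Rightarrow> bool" where
  "DRD V E f \<longleftrightarrow> (\<forall>v\<in>V. f v \<le> 3)
     \<and> (\<forall>v\<in>V. f v = 0 \<longrightarrow> ((\<exists>u. E v u \<and> f u = 3) \<or>
            (\<exists>u w. u \<noteq> w \<and> E v u \<and> E v w \<and> f u = 2 \<and> f w = 2)))
     \<and> (\<forall>v\<in>V. f v = 1 \<longrightarrow> (\<exists>u. E v u \<and> f u \<ge> 2))"

definition OIDRD :: "'a set \<Rightarrow> ('a \<Rightarrow> 'a \<Rightarrow> bool) \<Rightarrow> ('a \<Rightarrow> nat) \<Rightarrow> bool" where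
  "OIDRD V E f \<longleftrightarrow> DRD V E f \<and> indep_set E {v\<in>V. f v = 0}"

definition gamma_oidR :: "'a set \<Rightarrow> ('a \<Rightarrow> 'a \<Rightarrow> bool) \<Rightarrow> nat" where
  "gamma_oidR V E = (LEAST w. \<exists>f. OIDRD V E f \<and> weight V f = w)"

definition RD :: "'a set \<Rightarrow> ('a \<Rightarrow> 'a \<Rightarrow> bool) \<Rightarrow> ('a \<Rightarrow> nat) \<Rightarrow> bool" where
  "RD V E f \<longleftrightarrow> (\<forall>v\<in>V. f v \<le> 2)
     \<and> (\<forall>v\<in>V. f v = 0 \<longrightarrow> (\<exists>u. E v u \<and> f u = 2))"

definition OIRD :: "'a set \<Rightarrow> ('a \<Rightarrow> 'a \<Rightarrow> bool) \<Rightarrow> ('a \<Rightarrow> nat) \<Rightarrow> bool" where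
  "OIRD V E f \<longleftrightarrow> RD V E f \<and> indep_set E {v\<in>V. f v = 0}"

definition gamma_oiR :: "'a set \<Rightarrow> ('a \<Rightarrow> 'a \<Rightarrow> bool) \<Rightarrow> nat" where
  "gamma_oiR V E = (LEAST w. \<exists>f. OIRD V E f \<and> weight V f = w)"

end

theory Submission
  imports Defs
begin

lemma oiR_att:
  assumes "graph V E"
  shows "\<exists>g. OIRD V E g \<and> weight V g = gamma_oiR V E"
proof -
  have "OIRD V E (\<lambda>_. 2)" by (auto simp: OIRD_def RD_def indep_set_def)
  then have "\<exists>w. \<exists>f. OIRD V E f \<and> weight V f = w" by blast
  then show ?thesis unfolding gamma_oiR_def by (rule LeastI_ex)
qed

lemma oidR_att:
  assumes "graph V E"
  shows "\<exists>g. OIDRD V E g \<and> weight V g = gamma_oidR V E"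
proof -
  have "OIDRD V E (\<lambda>_. 3)" by (auto simp: OIDRD_def DRD_def indep_set_def)
  then have "\<exists>w. \<exists>f. OIDRD V E f \<and> weight V f = w" by blast
  then show ?thesis unfolding gamma_oidR_def by (rule LeastI_ex)
qed

lemma oiR_le: "OIRD V E f \<Longrightarrow> gamma_oiR V E \<le> weight V f"
  unfolding gamma_oiR_def by (rule Least_le) blast

lemma oidR_le: "OIDRD V E f \<Longrightarrow> gamma_oidR V E \<le> weight V f"
  unfolding gamma_oidR_def by (rule Least_le) blast

lemma part1:
  assumes g: "graph V E" and ne: "V \<noteq> {}"
  shows "gamma_oiR V E < gamma_oidR V E"
proof -
  have fin: "finite V" using g by (simp add: graph_def)
  have EV: "\<And>x y. E x y \<Longrightarrow> y \<in> V" using g by (simp add: graph_def)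
  obtain f where f: "OIDRD V E f" and wf: "weight V f = gamma_oidR V E"
    using oidR_att[OF g] by blast
  have le3: "\<forall>v\<in>V. f v \<le> 3" and
    c0: "\<forall>v\<in>V. f v = 0 \<longrightarrow> ((\<exists>u. E v u \<and> f u = 3) \<or>
            (\<exists>u w. u \<noteq> w \<and> E v u \<and> E v w \<and> f u = 2 \<and> f w = 2))" and
    c1: "\<forall>v\<in>V. f v = 1 \<longrightarrow> (\<exists>u. E v u \<and> f u \<ge> 2)" and
    ind: "indep_set E {v\<in>V. f v = 0}"
    using f by (auto simp: OIDRD_def DRD_def)
  have "\<exists>g. OIRD V E g \<and> weight V g < weight V f"
  proof (cases "\<exists>v\<in>V. f v = 3")
    case True
    define h where "h = (\<lambda>v. min (f v) 2)"
    have z: "{v\<in>V. h v = 0} = {v\<in>V. f v = 0}" by (auto simp: h_def)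
    have "OIRD V E h"
      unfolding OIRD_def RD_def z using ind
    proof (intro conjI ballI impI)
      fix v assume "v \<in> V" "h v = 0"
      then have "f v = 0" by (auto simp: h_def)
      then have "\<exists>u. E v u \<and> f u \<ge> 2" using c0 \<open>v \<in> V\<close> by force
      then show "\<exists>u. E v u \<and> h u = 2" by (auto simp: h_def)
    qed (auto simp: h_def)
    moreover have "weight V h < weight V f" unfolding weight_def
      apply (rule sum_strict_mono_ex1[OF fin])
      using True by (auto simp: h_def) force
    ultimately show ?thesis by blast
  next
    case False
    have "\<exists>v\<in>V. f v = 2"
    proof (rule ccontr)
      assume "\<not> ?thesis"
      then have lo: "\<forall>v\<in>V. f v < 2" using le3 False by force
      obtain v where "v \<in> V" using ne by blast
      then have "f v = 0 \<or> f v = 1" using lo by force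
      then show False
      proof
        assume "f v = 0"
        then obtain u where "E v u" "f u \<ge> 2" using c0 \<open>v \<in> V\<close> by force
        then show False using lo EV by force
      next
        assume "f v = 1"
        then obtain u where "E v u" "f u \<ge> 2" using c1 \<open>v \<in> V\<close> by force
        then show False using lo EV by force
      qed
    qed
    then obtain a where a: "a \<in> V" "f a = 2" by blast
    define h where "h = f(a := 1)"
    have z: "{v\<in>V. h v = 0} = {v\<in>V. f v = 0}" using a by (auto simp: h_def)
    have "OIRD V E h"
      unfolding OIRD_def RD_def z using ind
    proof (intro conjI ballI impI)
      fix v assume v: "v \<in> V" "h v = 0"
      then have "f v = 0" by (auto simp: h_def split: if_splits)
      then have "\<exists>u w. u \<noteq> w \<and> E v u \<and> E v w \<and> f u = 2 \<and> f w = 2"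
        using c0 v False EV by blast
      then obtain u w where "u \<noteq> w" "E v u" "E v w" "f u = 2" "f w = 2" by blast
      then show "\<exists>u. E v u \<and> h u = 2"
        by (cases "u = a") (auto simp: h_def)
    next
      fix v assume "v \<in> V" then show "h v \<le> 2"
        using le3 False by (auto simp: h_def) (metis le_antisym not_less_eq_eq numeral_3_eq_3 numeral_2_eq_2)
    qed
    moreover have "weight V h < weight V f" unfolding weight_def
      apply (rule sum_strict_mono_ex1[OF fin])
      using a by (auto simp: h_def)
    ultimately show ?thesis by blast
  qed
  then obtain h where "OIRD V E h" "weight V h < weight V f" by blast
  then show ?thesis using oiR_le[of V E h] wf by linarith
qed

theorem corollary2:
  fixes V :: "'a set" and E :: "'a \<Rightarrow> 'a \<Rightarrow> bool"
  assumes "connected_graph V E" and "nontrivial V"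
  shows "gamma_oiR V E < gamma_oidR V E \<and> gamma_oidR V E < 2 * gamma_oiR V E"
proof
  have g: "graph V E" and ne: "V \<noteq> {}" using assms(1) by (auto simp: connected_graph_def)
  show "gamma_oiR V E < gamma_oidR V E" by (rule part1[OF g ne])
  have fin: "finite V" using g by (simp add: graph_def)
  have EV: "\<And>x y. E x y \<Longrightarrow> x \<in> V \<and> y \<in> V" using g by (simp add: graph_def)
  have irr: "\<And>x. \<not> E x x" using g by (simp add: graph_def)
  obtain r where r: "OIRD V E r" and wr: "weight V r = gamma_oiR V E"
    using oiR_att[OF g] by blast
  have le2: "\<forall>v\<in>V. r v \<le> 2" and c0: "\<forall>v\<in>V. r v = 0 \<longrightarrow> (\<exists>u. E v u \<and> r u = 2)"
    and ind: "indep_set E {v\<in>V. r v = 0}"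
    using r by (auto simp: OIRD_def RD_def)
  show "gamma_oidR V E < 2 * gamma_oiR V E"
  proof (cases "\<exists>v\<in>V. r v = 2")
    case True
    define h where "h = (\<lambda>v. if r v = 2 then 3 else if r v = 1 then 2 else (0::nat))"
    have z: "{v\<in>V. h v = 0} = {v\<in>V. r v = 0}" using le2 by (auto simp: h_def)
    have "OIDRD V E h"
      unfolding OIDRD_def DRD_def z using ind
    proof (intro conjI ballI impI)
      fix v assume "v \<in> V" "h v = 0"
      then have "r v = 0" using le2 by (auto simp: h_def split: if_splits)
      then have "\<exists>u. E v u \<and> r u = 2" using c0 \<open>v \<in> V\<close> by blast
      then show "(\<exists>u. E v u \<and> h u = 3) \<or>
            (\<exists>u w. u \<noteq> w \<and> E v u \<and> E v w \<and> h u = 2 \<and> h w = 2)"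
        by (metis h_def)
    next
      fix v assume "v \<in> V" "h v = 1" then show "\<exists>u. E v u \<and> h u \<ge> 2"
        by (auto simp: h_def split: if_splits)
    qed (auto simp: h_def)
    moreover have "weight V h < weight V (\<lambda>v. 2 * r v)" unfolding weight_def
      apply (rule sum_strict_mono_ex1[OF fin])
      using True le2 by (auto simp: h_def) force
    moreover have "weight V (\<lambda>v. 2 * r v) = 2 * weight V r"
      unfolding weight_def by (simp add: sum_distrib_left)
    ultimately show ?thesis using oidR_le[of V E h] wr by linarith
  next
    case False
    have one: "\<forall>v\<in>V. r v = 1"
    proof
      fix v assume v: "v \<in> V"
      have "r v \<noteq> 0" using c0 v False EV by blast
      then show "r v = 1" using le2 v False by force
    qed
    then have "weight V r = card V" unfolding weight_def by simp
    obtain x y where xy: "x \<in> V" "y \<in> V" "x \<noteq> y"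
      using assms(2) unfolding nontrivial_def
      using card_le_Suc0_iff_eq[OF fin] by force
    have "E\<^sup>*\<^sup>* x y" using assms(1) xy by (auto simp: connected_graph_def)
    then obtain u where xu: "E x u" using xy(3)
      by (metis converse_rtranclpE)
    have uV: "u \<in> V" and "u \<noteq> x" using EV[OF xu] irr xu by auto
    define h where "h = (\<lambda>_. 2::nat)(x := 0, u := 3)"
    have z: "{v\<in>V. h v = 0} = {x}" using xy \<open>u \<noteq> x\<close> by (auto simp: h_def)
    have "OIDRD V E h"
      unfolding OIDRD_def DRD_def z
      using xu \<open>u \<noteq> x\<close> irr by (auto simp: h_def indep_set_def)
    moreover have "weight V h + 1 = 2 * card V"
    proof -
      have s1: "weight V h = h x + sum h (V - {x})" unfolding weight_def
        using fin xy by (simp add: sum.remove)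
      have s2: "sum h (V - {x}) = h u + sum h (V - {x} - {u})"
        using fin uV \<open>u \<noteq> x\<close> by (simp add: sum.remove)
      have s3: "sum h (V - {x} - {u}) = 2 * card (V - {x} - {u})"
        by (simp add: h_def)
      have c: "card (V - {x} - {u}) + 2 = card V"
        using fin uV xy \<open>u \<noteq> x\<close>
        by (metis Suc_1 add_2_eq_Suc' card.remove card_Diff_singleton finite_Diff insert_Diff insert_iff)
      have "h x = 0" "h u = 3" using \<open>u \<noteq> x\<close> by (auto simp: h_def)
      then show ?thesis using s1 s2 s3 c by linarith
    qed
    ultimately show ?thesis using oidR_le[of V E h] wr \<open>weight V r = card V\<close> by linarith
  qed
qed

end
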